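(* Consider the sequences generated by Algorithm PS under (A1)–(A7), let $p^k:=(z^k,w_1^k,\dots,w_{n-1}^k)$, and for each $k\ge0$ define the function $\varphi_k:\boldsymbol{\mathcal H}\to\mathbb R$ by $$\varphi_k(z,w_1,\dots,w_{n-1}):=\langle z,v^k\rangle+\sum_{i=1}^{n-1}\langle w_i,u_i^k\rangle-\sum_{i=1}^n\Big[\langle x_i^k,y_i^k\rangle+\tfrac1{4\beta_i}\|x_i^k-G_iz^k\|^2\Big]$$ (so the scalar $\varphi_k$ of the algorithm equals $\varphi_k(p^k)$). Then for all $k\ge0$: (a) $\varphi_k$ is affine, its gradient with respect to $\langle\cdot,\cdot\rangle_\gamma$ is $\nabla\varphi_k=(\gamma^{-1}v^k,u_1^k,\dots,u_{n-1}^k)$, and $\|\nabla\varphi_k\|_\gamma^2=\pi_k$; (b) for all $p=(z,w_1,\dots,w_{n-1})\in\boldsymbol{\mathcal H}$, with $w_n:=-\sum_{i=1}^{n-1}G_i^*w_i$, $$\varphi_k(p)=\sum_{i=1}^n\Big[\langle G_iz-x_i^k,\,y_i^k-w_i\rangle-\tfrac1{4\beta_i}\|x_i^k-G_iz^k\|^2\Big];$$ (c) $\mathcal S\subset\{p\in\boldsymbol{\mathcal H}:\varphi_k(p)\le0\}$; (d) $p^{k+1}=p^k-\tau_k\frac{\varphi_k(p^k)}{\|\nabla\varphi_k\|_\gamma^2}\nabla\varphi_k$ if $\varphi_k(p^k)>0$, and $p^{k+1}=p^k$ otherwise; (e) the sequences $(z^k)$ and $(w_i^k)$, $i=1,\dots,n$,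 are bounded.
   Context: Standing setting. Let $\mathcal H_0,\dots,\mathcal H_{n-1}$ be real Hilbert spaces ($n\ge2$) and $\mathcal H_n:=\mathcal H_0$. Conventions: $0\cdot\infty=0$, $r\cdot\infty=\infty$ for $r>0$, $1/\infty=0$, $1/0=\infty$. For each $i=1,\dots,n$: (A1) $G_i:\mathcal H_0\to\mathcal H_i$ is bounded linear and $G_n=I$; (A2) $A_i:\mathcal H_i\rightrightarrows\mathcal H_i$ is maximal monotone; (A3) $B_i:\mathcal H_i\to\mathcal H_i$ is monotone and $\ell_i$-Lipschitz, $\ell_i\in[0,\infty)$; (A4) $C_i:\mathcal H_i\to\mathcal H_i$ is $\beta_i$-cocoercive with $\beta_i\in(0,\infty]$, i.e. $\langle x-y,C_ix-C_iy\rangle\ge\beta_i\|C_ix-C_iy\|^2$ for all $x,y$ (so $\beta_i=\infty$ means $C_i$ is constant, and then $1/(4\beta_i)=0$); (A5) $D_i:\mathcal H_i\to\mathcal H_i$ is monotone and continuously differentiable with $\|D_i'(x)-D_i'(y)\|\le m_i\|x-y\|$ for all $x,y$, $m_i\in[0,\infty)$; (A6) with $T_i:=A_i+B_i+C_i+D_i$, the inclusion $0\in\sum_{i=1}^nG_i^*T_i(G_iz)$ has at least one solution $z\in\mathcal H_0$; (A7) there is $\mathcal I_D\subset\{1,\dots,n\}$ with $m_i>0$ for $i\in\mathcal I_D$ and $m_i=0$, $D_i=0$ for $i\notin\mathcal I_D$. Notation: $D_{i,(u)}(x):=D_i(u)+D_i'(u)(x-u)$; for a maximal monotone $S$, $J_S:=(S+I)^{-1}$.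 $\boldsymbol{\mathcal H}:=\mathcal H_0\times\mathcal H_1\times\cdots\times\mathcal H_{n-1}$ with inner product $\langle p,\tilde p\rangle_\gamma:=\gamma\langle z,\tilde z\rangle+\sum_{i=1}^{n-1}\langle w_i,\tilde w_i\rangle$ for $p=(z,w_1,\dots,w_{n-1})$, $\tilde p=(\tilde z,\tilde w_1,\dots,\tilde w_{n-1})$, and norm $\|\cdot\|_\gamma$; for such $p$ one writes $w_n:=-\sum_{i=1}^{n-1}G_i^*w_i$. The extended solution set is $\mathcal S:=\{p\in\boldsymbol{\mathcal H}: w_i\in T_i(G_iz),\ i=1,\dots,n\}$ (with $w_n$ as just defined). Algorithm PS. Input: $(z^0,w_1^0,\dots,w_{n-1}^0)\in\boldsymbol{\mathcal H}$, $0<\underline\tau<\overline\tau<2$, $0<\underline\theta<\overline\theta<2$, $\hat\rho>0$, $\hat\delta>0$, $\gamma>0$; $w_n^0:=-\sum_{i=1}^{n-1}G_i^*w_i^0$. For $k=0,1,2,\dots$: for each $i=1,\dots,n$ define $(\rho_i^k,x_i^k,y_i^k)$ as follows. (i) If $w_i^k\in T_i(G_iz^k)$: $\rho_i^k=\hat\rho$, $x_i^k=G_iz^k$, $y_i^k=w_i^k$. (ii) Otherwise, if $i\in\mathcal I_D$: $\rho_i^k>0$ and $x_i^k=J_{\rho_i^k(A_i+D_{i,(G_iz^k)})}\big(G_iz^k+\rho_i^kw_i^k-\rho_i^k(B_i+C_i)(G_iz^k)\big)$ satisfy $\underline\theta\le4\ell_i^2(\rho_i^k)^2+(\beta_i^{-1}+\hat\delta)\rho_i^k+(m_i\rho_i^k\|x_i^k-G_iz^k\|)^2\le\overline\theta$,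 and $y_i^k=\frac{G_iz^k-x_i^k}{\rho_i^k}+w_i^k+[B_i(x_i^k)-B_i(G_iz^k)]+[D_i(x_i^k)-D_{i,(G_iz^k)}(x_i^k)]$. (iii) Otherwise ($i\notin\mathcal I_D$): some $\rho_i^k>0$ is chosen, $x_i^k=J_{\rho_i^kA_i}\big(G_iz^k+\rho_i^kw_i^k-\rho_i^k(B_i+C_i)(G_iz^k)\big)$ and $y_i^k=\frac{G_iz^k-x_i^k}{\rho_i^k}+w_i^k+[B_i(x_i^k)-B_i(G_iz^k)]$. Then set $u_i^k=x_i^k-G_ix_n^k$ ($i=1,\dots,n-1$), $v^k=\sum_{i=1}^nG_i^*y_i^k$, $\varphi_k=\langle z^k,v^k\rangle+\sum_{i=1}^{n-1}\langle w_i^k,u_i^k\rangle-\sum_{i=1}^n\big[\langle x_i^k,y_i^k\rangle+\frac1{4\beta_i}\|x_i^k-G_iz^k\|^2\big]$, $\pi_k=\gamma^{-1}\|v^k\|^2+\sum_{i=1}^{n-1}\|u_i^k\|^2$. If $\varphi_k>0$: choose $\tau_k\in[\underline\tau,\overline\tau]$, $\alpha_k=\tau_k\varphi_k/\pi_k$, $z^{k+1}=z^k-\gamma^{-1}\alpha_kv^k$, $w_i^{k+1}=w_i^k-\alpha_ku_i^k$ ($i=1,\dots,n-1$); otherwise $z^{k+1}=z^k$, $w_i^{k+1}=w_i^k$. Finally $w_n^{k+1}=-\sum_{i=1}^{n-1}G_i^*w_i^{k+1}$. *)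

theory Defs
  imports "HOL-Analysis.Analysis"
begin

text \<open>The Hilbert spaces H_0,...,H_{n-1} are modelled as closed linear subspaces
  of one ambient real Hilbert space (every family of Hilbert spaces embeds isometrically
  in its Hilbert direct sum).  All operators are only constrained on their subspaces.\<close>

definition closed_subspace :: "'a::real_normed_vector set \<Rightarrow> bool" where
  "closed_subspace S \<longleftrightarrow> subspace S \<and> closed S"

definition bounded_linear_between :: "'a::real_normed_vector set \<Rightarrow> 'a set \<Rightarrow> ('a \<Rightarrow> 'a) \<Rightarrow> bool" where
  "bounded_linear_between S T G \<longleftrightarrow>
     (\<forall>x\<in>S. G x \<in> T) \<and>
     (\<forall>a b. \<forall>x\<in>S. \<forall>y\<in>S. G (a *\<^sub>R x + b *\<^sub>R y) = a *\<^sub>R G x + b *\<^sub>R G y) \<and>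
     (\<exists>K. \<forall>x\<in>S. norm (G x) \<le> K * norm x)"

definition is_adjoint_between :: "'a::real_inner set \<Rightarrow> 'a set \<Rightarrow> ('a \<Rightarrow> 'a) \<Rightarrow> ('a \<Rightarrow> 'a) \<Rightarrow> bool" where
  "is_adjoint_between S T G Gs \<longleftrightarrow>
     (\<forall>w\<in>T. Gs w \<in> S \<and> (\<forall>z\<in>S. inner (G z) w = inner z (Gs w)))"

definition monotone_op_on :: "'a::real_inner set \<Rightarrow> ('a \<Rightarrow> 'a) \<Rightarrow> bool" where
  "monotone_op_on S B \<longleftrightarrow> (\<forall>x\<in>S. B x \<in> S) \<and>
     (\<forall>x\<in>S. \<forall>y\<in>S. inner (x - y) (B x - B y) \<ge> 0)"

definition maximal_monotone_on :: "'a::real_inner set \<Rightarrow> ('a \<Rightarrow> 'a set) \<Rightarrow> bool" where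
  "maximal_monotone_on S A \<longleftrightarrow>
     (\<forall>x u. u \<in> A x \<longrightarrow> x \<in> S \<and> u \<in> S) \<and>
     (\<forall>x u y v. u \<in> A x \<longrightarrow> v \<in> A y \<longrightarrow> inner (x - y) (u - v) \<ge> 0) \<and>
     (\<forall>x\<in>S. \<forall>u\<in>S. (\<forall>y v. v \<in> A y \<longrightarrow> inner (x - y) (u - v) \<ge> 0) \<longrightarrow> u \<in> A x)"

definition lipschitz_op_on :: "'a::real_normed_vector set \<Rightarrow> real \<Rightarrow> ('a \<Rightarrow> 'a) \<Rightarrow> bool" where
  "lipschitz_op_on S L B \<longleftrightarrow> (\<forall>x\<in>S. \<forall>y\<in>S. norm (B x - B y) \<le> L * norm (x - y))"

text \<open>beta-cocoercivity with beta in (0,\<infinity>]; beta = \<infinity> means <x-y, Cx-Cy> \<ge> \<infinity>*\<parallel>Cx-Cy\<parallel>^2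
  with 0*\<infinity> = 0, i.e. C is constant.\<close>
definition cocoercive_on :: "'a::real_inner set \<Rightarrow> ereal \<Rightarrow> ('a \<Rightarrow> 'a) \<Rightarrow> bool" where
  "cocoercive_on S \<beta> C \<longleftrightarrow> (\<forall>x\<in>S. C x \<in> S) \<and>
     (\<forall>x\<in>S. \<forall>y\<in>S. ereal (inner (x - y) (C x - C y)) \<ge> \<beta> * ereal ((norm (C x - C y))\<^sup>2))"

definition ereal_recip :: "ereal \<Rightarrow> real" where
  "ereal_recip \<beta> = (if \<beta> = \<infinity> then 0 else 1 / real_of_ereal \<beta>)"

definition Dlin :: "('a::real_normed_vector \<Rightarrow> 'a) \<Rightarrow> ('a \<Rightarrow> 'a \<Rightarrow> 'a) \<Rightarrow> 'a \<Rightarrow> 'a \<Rightarrow> 'a" where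
  "Dlin D D' u x = D u + D' u (x - u)"

definition Top :: "('a::real_vector \<Rightarrow> 'a set) \<Rightarrow> ('a \<Rightarrow> 'a) \<Rightarrow> ('a \<Rightarrow> 'a) \<Rightarrow> ('a \<Rightarrow> 'a) \<Rightarrow> 'a \<Rightarrow> 'a set" where
  "Top A B C D x = (\<lambda>a. a + B x + C x + D x) ` A x"

definition resolvent :: "('a::real_vector \<Rightarrow> 'a set) \<Rightarrow> 'a \<Rightarrow> 'a set" where
  "resolvent S v = {x. v \<in> (\<lambda>s. s + x) ` S x}"

text \<open>The product space H_0 x H_1 x ... x H_{n-1}: points are functions p with
  p 0 = z, p i = w_i (1 \<le> i \<le> n-1), and p i = 0 for i \<ge> n.\<close>
definition prodH :: "nat \<Rightarrow> (nat \<Rightarrow> 'a::real_vector set) \<Rightarrow> (nat \<Rightarrow> 'a) set" where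
  "prodH n H = {p. (\<forall>i<n. p i \<in> H i) \<and> (\<forall>i\<ge>n. p i = 0)}"

definition inner_gamma :: "real \<Rightarrow> nat \<Rightarrow> (nat \<Rightarrow> 'a::real_inner) \<Rightarrow> (nat \<Rightarrow> 'a) \<Rightarrow> real" where
  "inner_gamma \<gamma> n p q = \<gamma> * inner (p 0) (q 0) + (\<Sum>i\<in>{1..<n}. inner (p i) (q i))"

definition norm_gamma :: "real \<Rightarrow> nat \<Rightarrow> (nat \<Rightarrow> 'a::real_inner) \<Rightarrow> real" where
  "norm_gamma \<gamma> n p = sqrt (inner_gamma \<gamma> n p p)"

definition affine_fun_on :: "(nat \<Rightarrow> 'a::real_vector) set \<Rightarrow> ((nat \<Rightarrow> 'a) \<Rightarrow> real) \<Rightarrow> bool" where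
  "affine_fun_on S f \<longleftrightarrow> (\<forall>p\<in>S. \<forall>q\<in>S. \<forall>t::real.
     f (\<lambda>i. (1 - t) *\<^sub>R p i + t *\<^sub>R q i) = (1 - t) * f p + t * f q)"

definition has_gradient_on :: "real \<Rightarrow> nat \<Rightarrow> (nat \<Rightarrow> 'a::real_inner) set \<Rightarrow> ((nat \<Rightarrow> 'a) \<Rightarrow> real) \<Rightarrow> (nat \<Rightarrow> 'a) \<Rightarrow> bool" where
  "has_gradient_on \<gamma> n S f g \<longleftrightarrow> g \<in> S \<and>
     (\<forall>p\<in>S. \<forall>\<epsilon>>0. \<exists>\<delta>>0. \<forall>h\<in>S. norm_gamma \<gamma> n h < \<delta> \<longrightarrow>
        \<bar>f (\<lambda>i. p i + h i) - f p - inner_gamma \<gamma> n g h\<bar> \<le> \<epsilon> * norm_gamma \<gamma> n h)"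

end

theory Submission imports Defs begin

lemma sum_split_last:
  assumes "1 \<le> n" shows "(\<Sum>i\<in>{1..n}. f i) = (\<Sum>i\<in>{1..<n}. f i) + f (n::nat)"
  using assms by (metis atLeastLessThanSuc_atLeastAtMost sum.atLeastLessThan_Suc)

lemma xy_case1:
  assumes mm: "maximal_monotone_on S A" and sub: "subspace S"
    and Bm: "monotone_op_on S B" and Cc: "cocoercive_on S \<beta> C" and Dm: "monotone_op_on S D"
    and q: "q \<in> S" and w: "w \<in> Top A B C D q" and xy: "x = q \<and> y = w"
  shows "x \<in> S \<and> y \<in> S \<and> (\<exists>a\<in>A x. y = a + B x + C q + D x)"
proof -
  from w obtain a where a: "a \<in> A q" "w = a + B q + C q + D q" unfolding Top_def by auto
  have "a \<in> S" using mm a(1) unfolding maximal_monotone_on_def by blast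
  moreover have "B q \<in> S" "C q \<in> S" "D q \<in> S" using Bm Cc Dm q
    unfolding monotone_op_on_def cocoercive_on_def by auto
  ultimately have "w \<in> S" using a(2) sub by (simp add: subspace_add)
  thus ?thesis using xy a q by auto
qed

lemma xy_case2:
  assumes mm: "maximal_monotone_on S A" and sub: "subspace S"
    and Bm: "monotone_op_on S B" and Cc: "cocoercive_on S \<beta> C" and Dm: "monotone_op_on S D"
    and q: "q \<in> S" and rho: "\<rho> > 0"
    and x: "x \<in> resolvent (\<lambda>q'. (\<lambda>a. \<rho> *\<^sub>R (a + Dlin D D' q q')) ` A q')
               (q + \<rho> *\<^sub>R w - \<rho> *\<^sub>R (B q + C q))"
    and y: "y = (1 / \<rho>) *\<^sub>R (q - x) + w + (B x - B q) + (D x - Dlin D D' q x)"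
  shows "x \<in> S \<and> y \<in> S \<and> (\<exists>a\<in>A x. y = a + B x + C q + D x)"
proof -
  from x obtain a where a: "a \<in> A x"
    "q + \<rho> *\<^sub>R w - \<rho> *\<^sub>R (B q + C q) = \<rho> *\<^sub>R (a + Dlin D D' q x) + x"
    unfolding resolvent_def by auto
  have aS: "a \<in> S" "x \<in> S" using mm a(1) unfolding maximal_monotone_on_def by blast+
  have "\<rho> *\<^sub>R y = \<rho> *\<^sub>R (a + B x + C q + D x)"
  proof -
    have "\<rho> *\<^sub>R a = q + \<rho> *\<^sub>R w - \<rho> *\<^sub>R (B q + C q) - x - \<rho> *\<^sub>R Dlin D D' q x"
      using a(2) by (simp add: algebra_simps)
    then show ?thesis using rho unfolding y by (simp add: algebra_simps)
  qed
  hence yeq: "y = a + B x + C q + D x" using rho by simp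
  have "B x \<in> S" "C q \<in> S" "D x \<in> S" using Bm Cc Dm q aS
    unfolding monotone_op_on_def cocoercive_on_def by auto
  hence "y \<in> S" using yeq aS sub by (simp add: subspace_add)
  thus ?thesis using yeq a aS by auto
qed

lemma xy_case3:
  assumes mm: "maximal_monotone_on S A" and sub: "subspace S"
    and Bm: "monotone_op_on S B" and Cc: "cocoercive_on S \<beta> C" and Dz: "\<forall>x'\<in>S. D x' = 0"
    and q: "q \<in> S" and rho: "\<rho> > 0"
    and x: "x \<in> resolvent (\<lambda>q'. (\<lambda>a. \<rho> *\<^sub>R a) ` A q')
               (q + \<rho> *\<^sub>R w - \<rho> *\<^sub>R (B q + C q))"
    and y: "y = (1 / \<rho>) *\<^sub>R (q - x) + w + (B x - B q)"
  shows "x \<in> S \<and> y \<in> S \<and> (\<exists>a\<in>A x. y = a + B x + C q + D x)"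
proof -
  from x obtain a where a: "a \<in> A x"
    "q + \<rho> *\<^sub>R w - \<rho> *\<^sub>R (B q + C q) = \<rho> *\<^sub>R a + x"
    unfolding resolvent_def by auto
  have aS: "a \<in> S" "x \<in> S" using mm a(1) unfolding maximal_monotone_on_def by blast+
  have "\<rho> *\<^sub>R y = \<rho> *\<^sub>R (a + B x + C q)"
  proof -
    have "\<rho> *\<^sub>R a = q + \<rho> *\<^sub>R w - \<rho> *\<^sub>R (B q + C q) - x"
      using a(2) by (simp add: algebra_simps)
    then show ?thesis using rho unfolding y by (simp add: algebra_simps)
  qed
  hence yeq: "y = a + B x + C q + D x" using rho Dz aS by simp
  have "B x \<in> S" "C q \<in> S" using Bm Cc q aS
    unfolding monotone_op_on_def cocoercive_on_def by auto
  hence "y \<in> S" using yeq aS sub Dz by (simp add: subspace_add)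
  thus ?thesis using yeq a aS by auto
qed

lemma coco_le:
  fixes C :: "'h::real_inner \<Rightarrow> 'h"
  assumes Cc: "cocoercive_on S \<beta> C" and bp: "\<beta> > 0"
    and X: "X \<in> S" and x: "x \<in> S" and q: "q \<in> S"
  shows "inner (X - x) (C q - C X) \<le> ereal_recip \<beta> / 4 * (norm (x - q))\<^sup>2"
proof -
  have co: "ereal (inner (q - X) (C q - C X)) \<ge> \<beta> * ereal ((norm (C q - C X))\<^sup>2)"
    using Cc X q unfolding cocoercive_on_def by blast
  show ?thesis
  proof (cases "\<beta> = \<infinity>")
    case True
    have "(norm (C q - C X))\<^sup>2 = 0"
    proof (rule ccontr)
      assume "(norm (C q - C X))\<^sup>2 \<noteq> 0"
      hence "(norm (C q - C X))\<^sup>2 > 0" by simp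
      hence "\<beta> * ereal ((norm (C q - C X))\<^sup>2) = \<infinity>" using True by simp
      thus False using co by simp
    qed
    hence "C q = C X" by simp
    thus ?thesis using True by (simp add: ereal_recip_def)
  next
    case False
    then obtain b where b: "\<beta> = ereal b" using bp by (cases \<beta>) auto
    have bpos: "b > 0" using bp b by simp
    have r: "ereal_recip \<beta> = 1 / b" using b by (simp add: ereal_recip_def)
    define c where "c = norm (C q - C X)"
    define e where "e = norm (x - q)"
    have c1: "b * c\<^sup>2 \<le> inner (q - X) (C q - C X)" using co b unfolding c_def by simp
    have c2: "inner (q - x) (C q - C X) \<le> e * c"
      unfolding e_def c_def using norm_cauchy_schwarz[of "q - x" "C q - C X"] by (simp add: norm_minus_commute)
    have eq: "inner (X - x) (C q - C X) = inner (q - x) (C q - C X) - inner (q - X) (C q - C X)"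
      by (simp add: algebra_simps inner_diff_left)
    have key: "e * c - b * c\<^sup>2 \<le> e\<^sup>2 / (4 * b)"
    proof -
      have "0 \<le> (e - 2 * b * c)\<^sup>2" by simp
      hence "0 \<le> e\<^sup>2 - 4 * b * (e * c - b * c\<^sup>2)" by (simp add: power2_eq_square algebra_simps)
      thus ?thesis using bpos by (simp add: field_simps)
    qed
    show ?thesis using eq c1 c2 key r unfolding e_def by (simp add: field_simps)
  qed
qed

lemma term_le:
  assumes mm: "maximal_monotone_on S A"
    and Bm: "monotone_op_on S B" and Cc: "cocoercive_on S \<beta> C" and bp: "\<beta> > 0"
    and Dm: "monotone_op_on S D"
    and X: "X \<in> S" and x: "x \<in> S" and q: "q \<in> S" and a: "a \<in> A x"
    and wt: "wt \<in> Top A B C D X"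
  shows "inner (X - x) ((a + B x + C q + D x) - wt) - ereal_recip \<beta> / 4 * (norm (x - q))\<^sup>2 \<le> 0"
proof -
  from wt obtain a' where a': "a' \<in> A X" "wt = a' + B X + C X + D X" unfolding Top_def by auto
  have "inner (x - X) (a - a') \<ge> 0" using mm a a'(1) unfolding maximal_monotone_on_def by blast
  moreover have "inner (x - X) (B x - B X) \<ge> 0" using Bm x X unfolding monotone_op_on_def by blast
  moreover have "inner (x - X) (D x - D X) \<ge> 0" using Dm x X unfolding monotone_op_on_def by blast
  moreover have "inner (X - x) (C q - C X) \<le> ereal_recip \<beta> / 4 * (norm (x - q))\<^sup>2"
    using coco_le[OF Cc bp X x q] .
  moreover have "inner (X - x) ((a + B x + C q + D x) - wt) =
     - inner (x - X) (a - a') - inner (x - X) (B x - B X) + inner (X - x) (C q - C X)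
     - inner (x - X) (D x - D X)"
    unfolding a'(2) by (simp add: algebra_simps inner_diff_left inner_diff_right inner_add_right)
  ultimately show ?thesis by linarith
qed

lemma norm_diff_scale_sq: fixes a b :: "'a::real_inner"
  shows "(norm (a - c *\<^sub>R b))\<^sup>2 = (norm a)\<^sup>2 - 2 * c * inner a b + c\<^sup>2 * (norm b)\<^sup>2"
  unfolding power2_norm_eq_inner
  by (simp add: inner_diff_left inner_diff_right inner_commute power2_eq_square algebra_simps)

theorem proposition4p2:
  fixes n :: nat
    and H :: "nat \<Rightarrow> 'h::{real_inner, complete_space} set"
    and G Gs :: "nat \<Rightarrow> 'h \<Rightarrow> 'h"
    and A :: "nat \<Rightarrow> 'h \<Rightarrow> 'h set"
    and B C D :: "nat \<Rightarrow> 'h \<Rightarrow> 'h"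
    and D' :: "nat \<Rightarrow> 'h \<Rightarrow> 'h \<Rightarrow> 'h"
    and lip m :: "nat \<Rightarrow> real"
    and \<beta> :: "nat \<Rightarrow> ereal"
    and ID :: "nat set"
    and \<tau>l \<tau>u \<theta>l \<theta>u \<rho>hat \<delta>hat \<gamma> :: real
    and z :: "nat \<Rightarrow> 'h"
    and w x y u :: "nat \<Rightarrow> nat \<Rightarrow> 'h"
    and v :: "nat \<Rightarrow> 'h"
    and \<rho> :: "nat \<Rightarrow> nat \<Rightarrow> real"
    and \<phi> \<pi> \<tau> \<alpha> :: "nat \<Rightarrow> real"
    and P grad :: "nat \<Rightarrow> nat \<Rightarrow> 'h"
    and Phi :: "nat \<Rightarrow> (nat \<Rightarrow> 'h) \<Rightarrow> real"
  assumes n2: "n \<ge> 2"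
    and Hsub: "\<forall>i<n. closed_subspace (H i)"
    and Hn: "H n = H 0"
    \<comment> \<open>(A1)\<close>
    and A1: "\<forall>i\<in>{1..n}. bounded_linear_between (H 0) (H i) (G i)
                          \<and> is_adjoint_between (H 0) (H i) (G i) (Gs i)"
    and A1n: "\<forall>z'\<in>H 0. G n z' = z'"
    \<comment> \<open>(A2)\<close>
    and A2: "\<forall>i\<in>{1..n}. maximal_monotone_on (H i) (A i)"
    \<comment> \<open>(A3)\<close>
    and A3: "\<forall>i\<in>{1..n}. monotone_op_on (H i) (B i) \<and> lip i \<ge> 0 \<and> lipschitz_op_on (H i) (lip i) (B i)"
    \<comment> \<open>(A4)\<close>
    and A4: "\<forall>i\<in>{1..n}. \<beta> i > 0 \<and> cocoercive_on (H i) (\<beta> i) (C i)"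
    \<comment> \<open>(A5)\<close>
    and A5: "\<forall>i\<in>{1..n}. monotone_op_on (H i) (D i) \<and> m i \<ge> 0
               \<and> (\<forall>x'\<in>H i. (D i has_derivative D' i x') (at x' within H i))
               \<and> (\<forall>x'\<in>H i. \<forall>y'\<in>H i. \<forall>h\<in>H i.
                     norm (D' i x' h - D' i y' h) \<le> m i * norm (x' - y') * norm h)"
    \<comment> \<open>(A6)\<close>
    and A6: "\<exists>zs\<in>H 0. \<exists>ws. (\<forall>i\<in>{1..n}. ws i \<in> Top (A i) (B i) (C i) (D i) (G i zs))
                          \<and> (\<Sum>i\<in>{1..n}. Gs i (ws i)) = 0"
    \<comment> \<open>(A7)\<close>
    and A7: "ID \<subseteq> {1..n} \<and> (\<forall>i\<in>ID. m i > 0)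
               \<and> (\<forall>i\<in>{1..n} - ID. m i = 0 \<and> (\<forall>x'\<in>H i. D i x' = 0))"
    \<comment> \<open>parameters of Algorithm PS\<close>
    and par: "0 < \<tau>l \<and> \<tau>l < \<tau>u \<and> \<tau>u < 2 \<and> 0 < \<theta>l \<and> \<theta>l < \<theta>u \<and> \<theta>u < 2
              \<and> \<rho>hat > 0 \<and> \<delta>hat > 0 \<and> \<gamma> > 0"
    and init: "z 0 \<in> H 0 \<and> (\<forall>i\<in>{1..<n}. w 0 i \<in> H i)"
    and wn: "\<forall>k. w k n = - (\<Sum>i\<in>{1..<n}. Gs i (w k i))"
    \<comment> \<open>steps (i), (ii), (iii)\<close>
    and step: "\<forall>k. \<forall>i\<in>{1..n}.
       (w k i \<in> Top (A i) (B i) (C i) (D i) (G i (z k)) \<longrightarrow>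
          \<rho> k i = \<rho>hat \<and> x k i = G i (z k) \<and> y k i = w k i)
     \<and> (w k i \<notin> Top (A i) (B i) (C i) (D i) (G i (z k)) \<and> i \<in> ID \<longrightarrow>
          \<rho> k i > 0
          \<and> x k i \<in> resolvent
               (\<lambda>q. (\<lambda>a. \<rho> k i *\<^sub>R (a + Dlin (D i) (D' i) (G i (z k)) q)) ` A i q)
               (G i (z k) + \<rho> k i *\<^sub>R w k i - \<rho> k i *\<^sub>R (B i (G i (z k)) + C i (G i (z k))))
          \<and> \<theta>l \<le> 4 * (lip i)\<^sup>2 * (\<rho> k i)\<^sup>2 + (ereal_recip (\<beta> i) + \<delta>hat) * \<rho> k i
                   + (m i * \<rho> k i * norm (x k i - G i (z k)))\<^sup>2
          \<and> 4 * (lip i)\<^sup>2 * (\<rho> k i)\<^sup>2 + (ereal_recip (\<beta> i) + \<delta>hat) * \<rho> k i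
                   + (m i * \<rho> k i * norm (x k i - G i (z k)))\<^sup>2 \<le> \<theta>u
          \<and> y k i = (1 / \<rho> k i) *\<^sub>R (G i (z k) - x k i) + w k i
                     + (B i (x k i) - B i (G i (z k)))
                     + (D i (x k i) - Dlin (D i) (D' i) (G i (z k)) (x k i)))
     \<and> (w k i \<notin> Top (A i) (B i) (C i) (D i) (G i (z k)) \<and> i \<notin> ID \<longrightarrow>
          \<rho> k i > 0
          \<and> x k i \<in> resolvent (\<lambda>q. (\<lambda>a. \<rho> k i *\<^sub>R a) ` A i q)
               (G i (z k) + \<rho> k i *\<^sub>R w k i - \<rho> k i *\<^sub>R (B i (G i (z k)) + C i (G i (z k))))
          \<and> y k i = (1 / \<rho> k i) *\<^sub>R (G i (z k) - x k i) + w k i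
                     + (B i (x k i) - B i (G i (z k))))"
    and u_def: "\<forall>k. \<forall>i\<in>{1..<n}. u k i = x k i - G i (x k n)"
    and v_def: "\<forall>k. v k = (\<Sum>i\<in>{1..n}. Gs i (y k i))"
    and \<phi>_def: "\<forall>k. \<phi> k = inner (z k) (v k) + (\<Sum>i\<in>{1..<n}. inner (w k i) (u k i))
                 - (\<Sum>i\<in>{1..n}. inner (x k i) (y k i)
                         + ereal_recip (\<beta> i) / 4 * (norm (x k i - G i (z k)))\<^sup>2)"
    and \<pi>_def: "\<forall>k. \<pi> k = (1 / \<gamma>) * (norm (v k))\<^sup>2 + (\<Sum>i\<in>{1..<n}. (norm (u k i))\<^sup>2)"
    and update: "\<forall>k.
       (\<phi> k > 0 \<longrightarrow> \<tau> k \<in> {\<tau>l..\<tau>u} \<and> \<alpha> k = \<tau> k * \<phi> k / \<pi> k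
           \<and> z (Suc k) = z k - (\<alpha> k / \<gamma>) *\<^sub>R v k
           \<and> (\<forall>i\<in>{1..<n}. w (Suc k) i = w k i - \<alpha> k *\<^sub>R u k i))
     \<and> (\<not> \<phi> k > 0 \<longrightarrow> z (Suc k) = z k \<and> (\<forall>i\<in>{1..<n}. w (Suc k) i = w k i))"
    \<comment> \<open>the points p^k, the affine functions \<phi>_k and the vectors (\<gamma>^{-1} v^k, u_1^k, ...)\<close>
    and P_def: "\<forall>k. P k = (\<lambda>i. if i = 0 then z k else if i < n then w k i else 0)"
    and Phi_def: "\<forall>k p. Phi k p = inner (p 0) (v k) + (\<Sum>i\<in>{1..<n}. inner (p i) (u k i))
                 - (\<Sum>i\<in>{1..n}. inner (x k i) (y k i)
                         + ereal_recip (\<beta> i) / 4 * (norm (x k i - G i (z k)))\<^sup>2)"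
    and grad_def: "\<forall>k. grad k = (\<lambda>i. if i = 0 then (1 / \<gamma>) *\<^sub>R v k else if i < n then u k i else 0)"
  shows "\<forall>k.
     \<phi> k = Phi k (P k)
     \<comment> \<open>(a)\<close>
   \<and> affine_fun_on (prodH n H) (Phi k)
   \<and> has_gradient_on \<gamma> n (prodH n H) (Phi k) (grad k)
   \<and> (norm_gamma \<gamma> n (grad k))\<^sup>2 = \<pi> k
     \<comment> \<open>(b)\<close>
   \<and> (\<forall>p\<in>prodH n H.
        Phi k p = (\<Sum>i\<in>{1..n}.
           inner (G i (p 0) - x k i)
                 (y k i - (if i = n then - (\<Sum>j\<in>{1..<n}. Gs j (p j)) else p i))
           - ereal_recip (\<beta> i) / 4 * (norm (x k i - G i (z k)))\<^sup>2))
     \<comment> \<open>(c)\<close>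
   \<and> (\<forall>p\<in>prodH n H.
        (\<forall>i\<in>{1..n}. (if i = n then - (\<Sum>j\<in>{1..<n}. Gs j (p j)) else p i)
                        \<in> Top (A i) (B i) (C i) (D i) (G i (p 0)))
        \<longrightarrow> Phi k p \<le> 0)
     \<comment> \<open>(d)\<close>
   \<and> P (Suc k) = (if Phi k (P k) > 0
        then (\<lambda>i. P k i - (\<tau> k * Phi k (P k) / (norm_gamma \<gamma> n (grad k))\<^sup>2) *\<^sub>R grad k i)
        else P k)
     \<comment> \<open>(e)\<close>
   \<and> bounded (range z) \<and> (\<forall>i\<in>{1..n}. bounded (range (\<lambda>k. w k i)))"
proof -
  have gpos: "\<gamma> > 0" and tl0: "0 < \<tau>l" and tu2: "\<tau>u < 2" using par by auto
  have n1: "1 \<le> n" "n \<in> {1..n}" using n2 by auto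
  have sub0: "subspace (H 0)" using Hsub n2 unfolding closed_subspace_def by auto
  have subH: "\<And>i. i \<le> n \<Longrightarrow> subspace (H i)"
  proof -
    fix i assume "i \<le> n"
    then consider "i < n" | "i = n" by linarith
    thus "subspace (H i)"
      by cases (use Hsub Hn sub0 in \<open>auto simp: closed_subspace_def\<close>)
  qed
  have GH: "\<And>i z'. i \<in> {1..n} \<Longrightarrow> z' \<in> H 0 \<Longrightarrow> G i z' \<in> H i"
    using A1 unfolding bounded_linear_between_def by blast
  have GsH: "\<And>i w'. i \<in> {1..n} \<Longrightarrow> w' \<in> H i \<Longrightarrow> Gs i w' \<in> H 0"
    using A1 unfolding is_adjoint_between_def by blast
  have adj: "\<And>i z' w'. i \<in> {1..n} \<Longrightarrow> z' \<in> H 0 \<Longrightarrow> w' \<in> H i \<Longrightarrow>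
        inner (G i z') w' = inner z' (Gs i w')"
    using A1 unfolding is_adjoint_between_def by blast
  have Gsn: "\<And>w'. w' \<in> H 0 \<Longrightarrow> Gs n w' = w'"
  proof -
    fix w' assume w': "w' \<in> H 0"
    hence wn': "w' \<in> H n" using Hn by simp
    have gs: "Gs n w' \<in> H 0" using GsH[OF n1(2) wn'] .
    define d where "d = w' - Gs n w'"
    have dH: "d \<in> H 0" using sub0 w' gs subspace_diff d_def by auto
    hence "inner (G n d) w' = inner d (Gs n w')" using adj[OF n1(2) _ wn'] by blast
    hence e: "inner d w' = inner d (Gs n w')" using A1n dH by simp
    have "inner d d = inner d (w' - Gs n w')" using d_def by simp
    also have "\<dots> = 0" using e by (simp add: inner_diff_right)
    finally show "Gs n w' = w'" unfolding d_def by simp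
  qed
  have GsB: "\<And>i. i \<in> {1..n} \<Longrightarrow> \<exists>K\<ge>0. \<forall>w'\<in>H i. norm (Gs i w') \<le> K * norm w'"
  proof -
    fix i assume i: "i \<in> {1..n}"
    obtain K where K: "\<forall>x'\<in>H 0. norm (G i x') \<le> K * norm x'"
      using A1 i unfolding bounded_linear_between_def by blast
    show "\<exists>K\<ge>0. \<forall>w'\<in>H i. norm (Gs i w') \<le> K * norm w'"
    proof (intro exI[of _ "max K 0"] conjI ballI)
      show "max K 0 \<ge> 0" by simp
      fix w' assume w': "w' \<in> H i"
      define g where "g = Gs i w'"
      have g: "g \<in> H 0" using GsH i w' g_def by blast
      have gb: "norm (G i g) \<le> max K 0 * norm g"
        using K g by (meson max.cobounded1 mult_right_mono norm_ge_zero order_trans)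
      have "(norm g)^2 = inner g g" by (simp add: power2_norm_eq_inner)
      also have "\<dots> = inner (G i g) w'" using adj[OF i g w'] g_def by simp
      also have "\<dots> \<le> norm (G i g) * norm w'" by (rule norm_cauchy_schwarz)
      also have "\<dots> \<le> (max K 0 * norm g) * norm w'" using gb by (simp add: mult_right_mono)
      finally have "norm g * norm g \<le> norm g * (max K 0 * norm w')"
        by (simp add: power2_eq_square algebra_simps)
      thus "norm (Gs i w') \<le> max K 0 * norm w'" unfolding g_def[symmetric]
        by (cases "norm g = 0") (auto simp: mult_le_cancel_left)
    qed
  qed
  have xy: "\<And>k i. z k \<in> H 0 \<Longrightarrow> i \<in> {1..n} \<Longrightarrow> x k i \<in> H i \<and> y k i \<in> H i \<and>
      (\<exists>a\<in>A i (x k i). y k i = a + B i (x k i) + C i (G i (z k)) + D i (x k i))"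
  proof -
    fix k i assume zk: "z k \<in> H 0" and i: "i \<in> {1..n}"
    have sub: "subspace (H i)" using subH i by auto
    have q: "G i (z k) \<in> H i" using GH i zk .
    have mm: "maximal_monotone_on (H i) (A i)" using A2 i by blast
    have Bm: "monotone_op_on (H i) (B i)" using A3 i by blast
    have Cc: "cocoercive_on (H i) (\<beta> i) (C i)" using A4 i by blast
    have Dm: "monotone_op_on (H i) (D i)" using A5 i by blast
    show "x k i \<in> H i \<and> y k i \<in> H i \<and>
      (\<exists>a\<in>A i (x k i). y k i = a + B i (x k i) + C i (G i (z k)) + D i (x k i))"
    proof (cases "w k i \<in> Top (A i) (B i) (C i) (D i) (G i (z k))")
      case True
      with step i have "x k i = G i (z k) \<and> y k i = w k i" by blast
      from xy_case1[OF mm sub Bm Cc Dm q True this] show ?thesis .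
    next
      case False
      show ?thesis
      proof (cases "i \<in> ID")
        case True
        from step i False True have h: "\<rho> k i > 0 \<and> x k i \<in> resolvent
               (\<lambda>q. (\<lambda>a. \<rho> k i *\<^sub>R (a + Dlin (D i) (D' i) (G i (z k)) q)) ` A i q)
               (G i (z k) + \<rho> k i *\<^sub>R w k i - \<rho> k i *\<^sub>R (B i (G i (z k)) + C i (G i (z k))))
          \<and> y k i = (1 / \<rho> k i) *\<^sub>R (G i (z k) - x k i) + w k i
                     + (B i (x k i) - B i (G i (z k)))
                     + (D i (x k i) - Dlin (D i) (D' i) (G i (z k)) (x k i))" by blast
        thus ?thesis using xy_case2[OF mm sub Bm Cc Dm q] by blast
      next
        case nID: False
        from step i False nID have h: "\<rho> k i > 0
          \<and> x k i \<in> resolvent (\<lambda>q. (\<lambda>a. \<rho> k i *\<^sub>R a) ` A i q)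
               (G i (z k) + \<rho> k i *\<^sub>R w k i - \<rho> k i *\<^sub>R (B i (G i (z k)) + C i (G i (z k))))
          \<and> y k i = (1 / \<rho> k i) *\<^sub>R (G i (z k) - x k i) + w k i
                     + (B i (x k i) - B i (G i (z k)))" by blast
        have Dz: "\<forall>x'\<in>H i. D i x' = 0" using A7 i nID by blast
        thus ?thesis using h xy_case3[OF mm sub Bm Cc Dz q] by blast
      qed
    qed
  qed
  have inv: "\<And>k. z k \<in> H 0 \<and> (\<forall>i\<in>{1..<n}. w k i \<in> H i)"
  proof -
    fix k show "z k \<in> H 0 \<and> (\<forall>i\<in>{1..<n}. w k i \<in> H i)"
    proof (induction k)
      case 0 show ?case using init by simp
    next
      case (Suc k)
      hence zk: "z k \<in> H 0" and wk: "\<forall>i\<in>{1..<n}. w k i \<in> H i" by auto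
      have yH: "\<And>i. i\<in>{1..n} \<Longrightarrow> y k i \<in> H i" using xy zk by blast
      have vH: "v k \<in> H 0" unfolding v_def[rule_format]
        using sub0 GsH yH by (auto intro!: subspace_sum)
      have xn: "x k n \<in> H 0" using xy[OF zk n1(2)] Hn by simp
      have uH: "\<And>i. i\<in>{1..<n} \<Longrightarrow> u k i \<in> H i"
      proof -
        fix i assume i: "i \<in> {1..<n}"
        hence i': "i \<in> {1..n}" by auto
        show "u k i \<in> H i" using u_def i xy[OF zk i'] GH[OF i' xn] subH[of i] i'
          by (auto intro: subspace_diff)
      qed
      show ?case
      proof (cases "\<phi> k > 0")
        case True
        then have "z (Suc k) = z k - (\<alpha> k / \<gamma>) *\<^sub>R v k"
            "\<forall>i\<in>{1..<n}. w (Suc k) i = w k i - \<alpha> k *\<^sub>R u k i" using update by blast+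
        then show ?thesis using zk wk vH uH sub0 subH
          by (auto intro!: subspace_diff subspace_scale)
      next
        case False
        then have "z (Suc k) = z k" "\<forall>i\<in>{1..<n}. w (Suc k) i = w k i" using update by blast+
        then show ?thesis using zk wk by auto
      qed
    qed
  qed
  have zH: "\<And>k. z k \<in> H 0" and wH: "\<And>k i. i\<in>{1..<n} \<Longrightarrow> w k i \<in> H i" using inv by auto

  have wnH: "\<And>k. w k n \<in> H 0" using wn sub0 GsH wH
    by (auto intro!: subspace_neg subspace_sum)
  have xH: "\<And>k i. i\<in>{1..n} \<Longrightarrow> x k i \<in> H i" and yH: "\<And>k i. i\<in>{1..n} \<Longrightarrow> y k i \<in> H i"
    and yform: "\<And>k i. i\<in>{1..n} \<Longrightarrow> \<exists>a\<in>A i (x k i). y k i = a + B i (x k i) + C i (G i (z k)) + D i (x k i)"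
    using xy zH by blast+
  have vH: "\<And>k. v k \<in> H 0" unfolding v_def[rule_format]
    using sub0 GsH yH by (auto intro!: subspace_sum)
  have xnH: "\<And>k. x k n \<in> H 0" using xH[OF n1(2)] Hn by simp
  have uH: "\<And>k i. i\<in>{1..<n} \<Longrightarrow> u k i \<in> H i"
  proof -
    fix k i assume i: "i \<in> {1..<n}"
    hence i': "i \<in> {1..n}" by auto
    show "u k i \<in> H i" using u_def i xH[OF i'] GH[OF i' xnH] subH[of i] i'
      by (auto intro: subspace_diff)
  qed
  define Kc where "Kc k = (\<Sum>i\<in>{1..n}. inner (x k i) (y k i)
                         + ereal_recip (\<beta> i) / 4 * (norm (x k i - G i (z k)))\<^sup>2)" for k
  have PhiE: "\<And>k p. Phi k p = inner (p 0) (v k) + (\<Sum>i\<in>{1..<n}. inner (p i) (u k i)) - Kc k"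
    using Phi_def Kc_def by simp
  have partPhi: "\<And>k. \<phi> k = Phi k (P k)"
  proof -
    fix k
    have "(\<Sum>i\<in>{1..<n}. inner (P k i) (u k i)) = (\<Sum>i\<in>{1..<n}. inner (w k i) (u k i))"
      by (rule sum.cong) (auto simp: P_def)
    thus "\<phi> k = Phi k (P k)" using \<phi>_def Kc_def PhiE P_def by simp
  qed
  have partAff: "\<And>k. affine_fun_on (prodH n H) (Phi k)"
  proof -
    fix k
    have "\<And>p q t. (\<Sum>i\<in>{1..<n}. inner ((1 - t) *\<^sub>R p i + t *\<^sub>R q i) (u k i))
       = (1 - t) * (\<Sum>i\<in>{1..<n}. inner (p i) (u k i)) + t * (\<Sum>i\<in>{1..<n}. inner (q i) (u k i))"
      by (simp add: inner_add_left sum.distrib sum_distrib_left)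
    thus "affine_fun_on (prodH n H) (Phi k)"
      unfolding affine_fun_on_def PhiE
      by (simp add: inner_add_left algebra_simps)
  qed
  have ig_nonneg: "\<And>h. inner_gamma \<gamma> n h h \<ge> 0"
    unfolding inner_gamma_def using gpos by (auto intro!: add_nonneg_nonneg sum_nonneg)
  have gradE: "\<And>k i. grad k i = (if i = 0 then (1 / \<gamma>) *\<^sub>R v k else if i < n then u k i else 0)"
    using grad_def by simp
  have PE: "\<And>k i. P k i = (if i = 0 then z k else if i < n then w k i else 0)"
    using P_def by simp
  have gradP: "\<And>k. grad k \<in> prodH n H"
    unfolding prodH_def using vH uH sub0 n1 by (auto simp: gradE intro: subspace_scale)
  have partGrad: "\<And>k. has_gradient_on \<gamma> n (prodH n H) (Phi k) (grad k)"
  proof -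
    fix k
    have "\<And>p h. Phi k (\<lambda>i. p i + h i) - Phi k p - inner_gamma \<gamma> n (grad k) h = 0"
    proof -
      fix p h :: "nat \<Rightarrow> 'h"
      have s: "(\<Sum>i\<in>{1..<n}. inner (grad k i) (h i)) = (\<Sum>i\<in>{1..<n}. inner (h i) (u k i))"
        by (rule sum.cong) (auto simp: gradE inner_commute)
      have s2: "(\<Sum>i\<in>{1..<n}. inner (p i + h i) (u k i)) = (\<Sum>i\<in>{1..<n}. inner (p i) (u k i)) + (\<Sum>i\<in>{1..<n}. inner (h i) (u k i))"
        by (simp add: inner_add_left sum.distrib)
      have s3: "\<gamma> * inner (grad k 0) (h 0) = inner (h 0) (v k)"
        using gpos by (simp add: gradE inner_commute)
      show "Phi k (\<lambda>i. p i + h i) - Phi k p - inner_gamma \<gamma> n (grad k) h = 0"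
        unfolding PhiE inner_gamma_def s s2 s3 by (simp add: inner_add_left)
    qed
    moreover have "\<And>h. norm_gamma \<gamma> n h \<ge> 0" unfolding norm_gamma_def using ig_nonneg by simp
    ultimately show "has_gradient_on \<gamma> n (prodH n H) (Phi k) (grad k)"
      unfolding has_gradient_on_def using gradP
      by (auto intro!: exI[of _ 1] mult_nonneg_nonneg)
  qed
  have partNorm: "\<And>k. (norm_gamma \<gamma> n (grad k))\<^sup>2 = \<pi> k"
  proof -
    fix k
    have s: "(\<Sum>i\<in>{1..<n}. inner (grad k i) (grad k i)) = (\<Sum>i\<in>{1..<n}. (norm (u k i))\<^sup>2)"
      by (rule sum.cong) (auto simp: gradE power2_norm_eq_inner)
    have "inner_gamma \<gamma> n (grad k) (grad k) = \<pi> k"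
      unfolding inner_gamma_def s \<pi>_def[rule_format] using gpos
      by (simp add: gradE power2_norm_eq_inner power2_eq_square) (metis power2_eq_square power2_norm_eq_inner)
    thus "(norm_gamma \<gamma> n (grad k))\<^sup>2 = \<pi> k" unfolding norm_gamma_def using ig_nonneg[of "grad k"] by simp
  qed
  have partB: "\<And>k p. p \<in> prodH n H \<Longrightarrow> Phi k p = (\<Sum>i\<in>{1..n}.
           inner (G i (p 0) - x k i)
                 (y k i - (if i = n then - (\<Sum>j\<in>{1..<n}. Gs j (p j)) else p i))
           - ereal_recip (\<beta> i) / 4 * (norm (x k i - G i (z k)))\<^sup>2)"
  proof -
    fix k p assume pP: "p \<in> prodH n H"
    have p0: "p 0 \<in> H 0" and pi: "\<And>i. i < n \<Longrightarrow> p i \<in> H i" using pP n1 unfolding prodH_def by auto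
    define W where "W i = (if i = n then - (\<Sum>j\<in>{1..<n}. Gs j (p j)) else p i)" for i
    define c where "c i = ereal_recip (\<beta> i) / 4 * (norm (x k i - G i (z k)))\<^sup>2" for i
    have expand: "\<And>i. inner (G i (p 0) - x k i) (y k i - W i) - c i
       = inner (G i (p 0)) (y k i) - inner (G i (p 0)) (W i) - (inner (x k i) (y k i) + c i)
         + inner (x k i) (W i)"
      by (simp add: inner_diff_left inner_diff_right)
    have S1: "(\<Sum>i\<in>{1..n}. inner (G i (p 0)) (y k i)) = inner (p 0) (v k)"
    proof -
      have "(\<Sum>i\<in>{1..n}. inner (G i (p 0)) (y k i)) = (\<Sum>i\<in>{1..n}. inner (p 0) (Gs i (y k i)))"
        by (rule sum.cong) (auto intro: adj[OF _ p0 yH])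
      also have "\<dots> = inner (p 0) (v k)" by (simp add: v_def inner_sum_right)
      finally show ?thesis .
    qed
    have S2: "(\<Sum>i\<in>{1..n}. inner (G i (p 0)) (W i)) = 0"
    proof -
      have a: "(\<Sum>i\<in>{1..<n}. inner (G i (p 0)) (W i)) = (\<Sum>i\<in>{1..<n}. inner (p 0) (Gs i (p i)))"
        by (rule sum.cong) (auto simp: W_def intro!: adj p0 pi)
      have b: "inner (G n (p 0)) (W n) = - (\<Sum>i\<in>{1..<n}. inner (p 0) (Gs i (p i)))"
        using A1n p0 by (simp add: W_def inner_sum_right)
      show ?thesis using a b sum_split_last[OF n1(1), of "\<lambda>i. inner (G i (p 0)) (W i)"] by simp
    qed
    have S4: "(\<Sum>i\<in>{1..n}. inner (x k i) (W i)) = (\<Sum>i\<in>{1..<n}. inner (p i) (u k i))"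
    proof -
      have a: "(\<Sum>i\<in>{1..<n}. inner (x k i) (W i)) = (\<Sum>i\<in>{1..<n}. inner (x k i) (p i))"
        by (rule sum.cong) (auto simp: W_def)
      have b1: "(\<Sum>i\<in>{1..<n}. inner (x k n) (Gs i (p i))) = (\<Sum>i\<in>{1..<n}. inner (G i (x k n)) (p i))"
        by (rule sum.cong) (auto intro!: adj[symmetric] xnH pi)
      have b: "inner (x k n) (W n) = - (\<Sum>i\<in>{1..<n}. inner (G i (x k n)) (p i))"
        using b1 by (simp add: W_def inner_sum_right)
      have c: "(\<Sum>i\<in>{1..<n}. inner (x k i) (p i) - inner (G i (x k n)) (p i))
          = (\<Sum>i\<in>{1..<n}. inner (p i) (u k i))"
        by (rule sum.cong) (auto simp: u_def inner_diff_right inner_commute)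
      show ?thesis using a b c sum_split_last[OF n1(1), of "\<lambda>i. inner (x k i) (W i)"]
        by (simp add: sum_subtractf)
    qed
    have S3: "(\<Sum>i\<in>{1..n}. inner (x k i) (y k i) + c i) = Kc k" by (simp add: Kc_def c_def)
    have "(\<Sum>i\<in>{1..n}. inner (G i (p 0) - x k i) (y k i - W i) - c i) = Phi k p"
      unfolding expand PhiE using S1 S2 S3 S4 by (simp add: sum.distrib sum_subtractf)
    thus "Phi k p = (\<Sum>i\<in>{1..n}.
           inner (G i (p 0) - x k i)
                 (y k i - (if i = n then - (\<Sum>j\<in>{1..<n}. Gs j (p j)) else p i))
           - ereal_recip (\<beta> i) / 4 * (norm (x k i - G i (z k)))\<^sup>2)"
      unfolding W_def c_def by simp
  qed
  have partC: "\<And>k p. p \<in> prodH n H \<Longrightarrow>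
        (\<forall>i\<in>{1..n}. (if i = n then - (\<Sum>j\<in>{1..<n}. Gs j (p j)) else p i)
                        \<in> Top (A i) (B i) (C i) (D i) (G i (p 0))) \<Longrightarrow> Phi k p \<le> 0"
  proof -
    fix k p assume pP: "p \<in> prodH n H" and hyp: "\<forall>i\<in>{1..n}. (if i = n then - (\<Sum>j\<in>{1..<n}. Gs j (p j)) else p i)
                        \<in> Top (A i) (B i) (C i) (D i) (G i (p 0))"
    have p0: "p 0 \<in> H 0" using pP n1 unfolding prodH_def by auto
    have "Phi k p = (\<Sum>i\<in>{1..n}.
           inner (G i (p 0) - x k i)
                 (y k i - (if i = n then - (\<Sum>j\<in>{1..<n}. Gs j (p j)) else p i))
           - ereal_recip (\<beta> i) / 4 * (norm (x k i - G i (z k)))\<^sup>2)" using partB[OF pP] .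
    also have "\<dots> \<le> 0"
    proof (rule sum_nonpos)
      fix i assume i: "i \<in> {1..n}"
      have mm: "maximal_monotone_on (H i) (A i)" using A2 i by blast
      have Bm: "monotone_op_on (H i) (B i)" using A3 i by blast
      have Cc: "cocoercive_on (H i) (\<beta> i) (C i)" and bp: "\<beta> i > 0" using A4 i by blast+
      have Dm: "monotone_op_on (H i) (D i)" using A5 i by blast
      obtain a where a: "a \<in> A i (x k i)" "y k i = a + B i (x k i) + C i (G i (z k)) + D i (x k i)"
        using yform[OF i] by blast
      have wt: "(if i = n then - (\<Sum>j\<in>{1..<n}. Gs j (p j)) else p i)
                        \<in> Top (A i) (B i) (C i) (D i) (G i (p 0))" using hyp i by blast
      show "inner (G i (p 0) - x k i)
                 (y k i - (if i = n then - (\<Sum>j\<in>{1..<n}. Gs j (p j)) else p i))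
           - ereal_recip (\<beta> i) / 4 * (norm (x k i - G i (z k)))\<^sup>2 \<le> 0"
        using term_le[OF mm Bm Cc bp Dm GH[OF i p0] xH[OF i] GH[OF i zH] a(1) wt] a(2) by simp
    qed
    finally show "Phi k p \<le> 0" .
  qed
  have partD: "\<And>k. P (Suc k) = (if Phi k (P k) > 0
        then (\<lambda>i. P k i - (\<tau> k * Phi k (P k) / (norm_gamma \<gamma> n (grad k))\<^sup>2) *\<^sub>R grad k i)
        else P k)"
  proof -
    fix k
    show "P (Suc k) = (if Phi k (P k) > 0
        then (\<lambda>i. P k i - (\<tau> k * Phi k (P k) / (norm_gamma \<gamma> n (grad k))\<^sup>2) *\<^sub>R grad k i)
        else P k)"
    proof (cases "\<phi> k > 0")
      case True
      then have u: "\<alpha> k = \<tau> k * \<phi> k / \<pi> k" "z (Suc k) = z k - (\<alpha> k / \<gamma>) *\<^sub>R v k"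
            "\<forall>i\<in>{1..<n}. w (Suc k) i = w k i - \<alpha> k *\<^sub>R u k i" using update by blast+
      have "P (Suc k) = (\<lambda>i. P k i - (\<tau> k * \<phi> k / \<pi> k) *\<^sub>R grad k i)"
      proof
        fix i show "P (Suc k) i = P k i - (\<tau> k * \<phi> k / \<pi> k) *\<^sub>R grad k i"
          using u by (cases "i = 0"; cases "i < n") (auto simp: PE gradE)
      qed
      thus ?thesis using True partPhi[of k] partNorm[of k] by simp
    next
      case False
      then have "z (Suc k) = z k" "\<forall>i\<in>{1..<n}. w (Suc k) i = w k i" using update by blast+
      hence "P (Suc k) = P k" by (auto simp: PE)
      thus ?thesis using False partPhi[of k] by simp
    qed
  qed
  obtain zs ws where zs: "zs \<in> H 0"
    and wsT: "\<forall>i\<in>{1..n}. ws i \<in> Top (A i) (B i) (C i) (D i) (G i zs)"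
    and wsum: "(\<Sum>i\<in>{1..n}. Gs i (ws i)) = 0" using A6 by blast
  have wsH: "\<And>i. i\<in>{1..n} \<Longrightarrow> ws i \<in> H i"
  proof -
    fix i assume i: "i \<in> {1..n}"
    have sub: "subspace (H i)" using subH i by auto
    have mm: "maximal_monotone_on (H i) (A i)" using A2 i by blast
    have Bm: "monotone_op_on (H i) (B i)" using A3 i by blast
    have Cc: "cocoercive_on (H i) (\<beta> i) (C i)" using A4 i by blast
    have Dm: "monotone_op_on (H i) (D i)" using A5 i by blast
    have T: "ws i \<in> Top (A i) (B i) (C i) (D i) (G i zs)" using wsT i by blast
    show "ws i \<in> H i" using xy_case1[OF mm sub Bm Cc Dm GH[OF i zs] T, of "G i zs" "ws i"] by simp
  qed
  have wsn: "ws n = - (\<Sum>i\<in>{1..<n}. Gs i (ws i))"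
  proof -
    have "ws n \<in> H 0" using wsH[OF n1(2)] Hn by simp
    hence "Gs n (ws n) = ws n" using Gsn by blast
    hence "(\<Sum>i\<in>{1..<n}. Gs i (ws i)) + ws n = 0" using wsum sum_split_last[OF n1(1), of "\<lambda>i. Gs i (ws i)"] by simp
    thus ?thesis by (simp add: eq_neg_iff_add_eq_0 add.commute)
  qed
  define ps where "ps = (\<lambda>i. if i = 0 then zs else if i < n then ws i else 0)"
  have psP: "ps \<in> prodH n H" unfolding prodH_def ps_def using zs wsH n1 by auto
  have pssum: "(\<Sum>j\<in>{1..<n}. Gs j (ps j)) = (\<Sum>j\<in>{1..<n}. Gs j (ws j))"
    by (rule sum.cong) (auto simp: ps_def)
  have psS: "\<forall>i\<in>{1..n}. (if i = n then - (\<Sum>j\<in>{1..<n}. Gs j (ps j)) else ps i)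
                        \<in> Top (A i) (B i) (C i) (D i) (G i (ps 0))"
  proof
    fix i assume i: "i \<in> {1..n}"
    have "(if i = n then - (\<Sum>j\<in>{1..<n}. Gs j (ps j)) else ps i) = ws i"
      using i wsn pssum by (auto simp: ps_def)
    thus "(if i = n then - (\<Sum>j\<in>{1..<n}. Gs j (ps j)) else ps i)
                        \<in> Top (A i) (B i) (C i) (D i) (G i (ps 0))"
      using wsT i by (simp add: ps_def)
  qed
  have Phips: "\<And>k. Phi k ps \<le> 0" using partC psP psS by blast
  define N where "N k = \<gamma> * (norm (z k - zs))\<^sup>2 + (\<Sum>i\<in>{1..<n}. (norm (w k i - ws i))\<^sup>2)" for k
  have pinn: "\<And>k. \<pi> k \<ge> 0" using \<pi>_def gpos by (simp add: sum_nonneg)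
  have Nstep: "\<And>k. N (Suc k) \<le> N k"
  proof -
    fix k
    show "N (Suc k) \<le> N k"
    proof (cases "\<phi> k > 0")
      case False
      then have "z (Suc k) = z k" "\<forall>i\<in>{1..<n}. w (Suc k) i = w k i" using update by blast+
      moreover have "(\<Sum>i\<in>{1..<n}. (norm (w (Suc k) i - ws i))\<^sup>2) = (\<Sum>i\<in>{1..<n}. (norm (w k i - ws i))\<^sup>2)"
        using calculation(2) by (intro sum.cong) auto
      ultimately show ?thesis unfolding N_def by simp
    next
      case True
      then have u: "\<tau> k \<in> {\<tau>l..\<tau>u}" "\<alpha> k = \<tau> k * \<phi> k / \<pi> k"
            "z (Suc k) = z k - (\<alpha> k / \<gamma>) *\<^sub>R v k"
            "\<forall>i\<in>{1..<n}. w (Suc k) i = w k i - \<alpha> k *\<^sub>R u k i" using update by blast+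
      define t where "t = \<alpha> k"
      have tnn: "t \<ge> 0" unfolding t_def u(2) using u(1) tl0 True pinn[of k] by auto
      have zeq: "\<gamma> * (norm (z (Suc k) - zs))\<^sup>2 = \<gamma> * (norm (z k - zs))\<^sup>2
          - 2 * t * inner (z k - zs) (v k) + t\<^sup>2 * ((1 / \<gamma>) * (norm (v k))\<^sup>2)"
      proof -
        have "z (Suc k) - zs = (z k - zs) - (t / \<gamma>) *\<^sub>R v k" using u(3) t_def by simp
        hence "(norm (z (Suc k) - zs))\<^sup>2 = (norm (z k - zs))\<^sup>2 - 2 * (t / \<gamma>) * inner (z k - zs) (v k)
            + (t / \<gamma>)\<^sup>2 * (norm (v k))\<^sup>2" using norm_diff_scale_sq by metis
        thus ?thesis using gpos by (simp add: field_simps power2_eq_square)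
      qed
      have weq: "\<And>i. i\<in>{1..<n} \<Longrightarrow> (norm (w (Suc k) i - ws i))\<^sup>2 = (norm (w k i - ws i))\<^sup>2
          - 2 * t * inner (w k i - ws i) (u k i) + t\<^sup>2 * (norm (u k i))\<^sup>2"
      proof -
        fix i assume i: "i \<in> {1..<n}"
        have "w (Suc k) i - ws i = (w k i - ws i) - t *\<^sub>R u k i" using u(4) i t_def by simp
        thus "(norm (w (Suc k) i - ws i))\<^sup>2 = (norm (w k i - ws i))\<^sup>2
          - 2 * t * inner (w k i - ws i) (u k i) + t\<^sup>2 * (norm (u k i))\<^sup>2"
          using norm_diff_scale_sq by metis
      qed
      have sw: "(\<Sum>i\<in>{1..<n}. (norm (w (Suc k) i - ws i))\<^sup>2) =
          (\<Sum>i\<in>{1..<n}. (norm (w k i - ws i))\<^sup>2) - 2 * t * (\<Sum>i\<in>{1..<n}. inner (w k i - ws i) (u k i))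
          + t\<^sup>2 * (\<Sum>i\<in>{1..<n}. (norm (u k i))\<^sup>2)"
        by (simp add: weq sum.distrib sum_subtractf sum_distrib_left)
      have Neq: "N (Suc k) = N k - 2 * t * (inner (z k - zs) (v k) + (\<Sum>i\<in>{1..<n}. inner (w k i - ws i) (u k i)))
          + t\<^sup>2 * \<pi> k"
        unfolding N_def zeq sw \<pi>_def[rule_format] by (simp add: algebra_simps)
      have lin: "inner (z k - zs) (v k) + (\<Sum>i\<in>{1..<n}. inner (w k i - ws i) (u k i)) = \<phi> k - Phi k ps"
      proof -
        have a: "(\<Sum>i\<in>{1..<n}. inner (ps i) (u k i)) = (\<Sum>i\<in>{1..<n}. inner (ws i) (u k i))"
          by (rule sum.cong) (auto simp: ps_def)
        show ?thesis unfolding PhiE \<phi>_def[rule_format] a Kc_def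
          by (simp add: ps_def inner_diff_left sum_subtractf)
      qed
      have ge: "inner (z k - zs) (v k) + (\<Sum>i\<in>{1..<n}. inner (w k i - ws i) (u k i)) \<ge> \<phi> k"
        using lin Phips[of k] by linarith
      have "N (Suc k) \<le> N k - 2 * t * \<phi> k + t\<^sup>2 * \<pi> k"
        using Neq ge tnn by (smt (verit) mult_left_mono)
      also have "\<dots> \<le> N k"
      proof (cases "\<pi> k = 0")
        case True thus ?thesis using u(2) t_def by simp
      next
        case False
        hence pp: "\<pi> k > 0" using pinn[of k] by simp
        have "t\<^sup>2 * \<pi> k = t * (\<tau> k * \<phi> k)" using pp unfolding t_def u(2) by (simp add: power2_eq_square)
        moreover have "t * (\<tau> k * \<phi> k) \<le> t * (2 * \<phi> k)"
          using tnn True u(1) tu2 by (intro mult_left_mono) auto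
        ultimately show ?thesis by simp
      qed
      finally show ?thesis .
    qed
  qed
  have Nle: "\<And>k. N k \<le> N 0"
  proof -
    fix k show "N k \<le> N 0"
      by (induction k) (auto intro: order_trans[OF Nstep])
  qed
  have Nz: "\<And>k. \<gamma> * (norm (z k - zs))\<^sup>2 \<le> N 0"
    using Nle unfolding N_def by (smt (verit) sum_nonneg zero_le_power2)
  have Nw: "\<And>k i. i\<in>{1..<n} \<Longrightarrow> (norm (w k i - ws i))\<^sup>2 \<le> N 0"
  proof -
    fix k i assume i: "i \<in> {1..<n}"
    have "(norm (w k i - ws i))\<^sup>2 \<le> (\<Sum>i\<in>{1..<n}. (norm (w k i - ws i))\<^sup>2)"
      by (rule member_le_sum) (use i in auto)
    moreover have "\<gamma> * (norm (z k - zs))\<^sup>2 \<ge> 0" using gpos by simp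
    ultimately show "(norm (w k i - ws i))\<^sup>2 \<le> N 0" using Nle[of k] unfolding N_def by linarith
  qed
  have bz: "bounded (range z)"
    unfolding bounded_iff
  proof (intro exI ballI)
    fix y assume "y \<in> range z"
    then obtain k where k: "y = z k" by auto
    have "(norm (z k - zs))\<^sup>2 \<le> N 0 / \<gamma>" using Nz[of k] gpos by (simp add: field_simps)
    hence "norm (z k - zs) \<le> sqrt (N 0 / \<gamma>)" by (rule real_le_rsqrt)
    thus "norm y \<le> norm zs + sqrt (N 0 / \<gamma>)" unfolding k using norm_triangle_sub[of "z k" zs] by linarith
  qed
  have bwi: "\<And>i k. i\<in>{1..<n} \<Longrightarrow> norm (w k i) \<le> norm (ws i) + sqrt (N 0)"
  proof -
    fix i k assume i: "i \<in> {1..<n}"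
    have "norm (w k i - ws i) \<le> sqrt (N 0)" using Nw[OF i] by (rule real_le_rsqrt)
    thus "norm (w k i) \<le> norm (ws i) + sqrt (N 0)" using norm_triangle_sub[of "w k i" "ws i"] by linarith
  qed
  obtain Kf where Kf: "\<And>i. i \<in> {1..n} \<Longrightarrow> Kf i \<ge> 0 \<and> (\<forall>w'\<in>H i. norm (Gs i w') \<le> Kf i * norm w')"
    using GsB by metis
  have bwn: "\<And>k. norm (w k n) \<le> (\<Sum>i\<in>{1..<n}. Kf i * (norm (ws i) + sqrt (N 0)))"
  proof -
    fix k
    have "norm (w k n) = norm (\<Sum>i\<in>{1..<n}. Gs i (w k i))" using wn by simp
    also have "\<dots> \<le> (\<Sum>i\<in>{1..<n}. norm (Gs i (w k i)))" by (rule norm_sum)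
    also have "\<dots> \<le> (\<Sum>i\<in>{1..<n}. Kf i * (norm (ws i) + sqrt (N 0)))"
    proof (rule sum_mono)
      fix i assume i: "i \<in> {1..<n}"
      hence i': "i \<in> {1..n}" by auto
      have "norm (Gs i (w k i)) \<le> Kf i * norm (w k i)" using Kf[OF i'] wH[OF i] by blast
      also have "\<dots> \<le> Kf i * (norm (ws i) + sqrt (N 0))"
        using Kf[OF i'] bwi[OF i] by (intro mult_left_mono) auto
      finally show "norm (Gs i (w k i)) \<le> Kf i * (norm (ws i) + sqrt (N 0))" .
    qed
    finally show "norm (w k n) \<le> (\<Sum>i\<in>{1..<n}. Kf i * (norm (ws i) + sqrt (N 0)))" .
  qed
  have bw: "\<forall>i\<in>{1..n}. bounded (range (\<lambda>k. w k i))"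
  proof
    fix i assume i: "i \<in> {1..n}"
    show "bounded (range (\<lambda>k. w k i))"
    proof (cases "i = n")
      case True
      thus ?thesis unfolding bounded_iff using bwn by blast
    next
      case False
      hence "i \<in> {1..<n}" using i by auto
      thus ?thesis unfolding bounded_iff using bwi by blast
    qed
  qed
  show ?thesis using partPhi partAff partGrad partNorm partB partC partD bz bw by blast

qed

end
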